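(* Let $A\in\mathbb{R}^{n\times n}$, $B\in\mathbb{R}^{n\times k}$ and $F\in\mathbb{R}^{k\times n}$ be arbitrary. For $C\in\mathbb{R}^{m\times n}$ let $\Omega(C,F)=[C;\,C(A+BF);\,\dots;\,C(A+BF)^{n-1}]$ and let $\mathcal{V}^*(C)$ be the maximal $(A,B)$-invariant subspace contained in $\operatorname{Ker}C$. Let $BR1_a=\arg\min_{C\in\mathbb{R}^{m\times n}}\dim\operatorname{Ker}\Omega(C,F)$ and $BR2X_a=\arg\min_{C\in\mathbb{R}^{m\times n}}\dim\mathcal{V}^*(C)$. Then for every $C_1\in BR2X_a$ and every $C_2\in BR1_a$, $\dim\mathcal{V}^*(C_1)\ge\dim\operatorname{Ker}\Omega(C_2,F)$.
   Context: A subspace $\mathcal{V}\subseteq\mathbb{R}^n$ is $(A,B)$-invariant if there exists a matrix $F'$ with $(A+BF')\mathcal{V}\subseteq\mathcal{V}$. Among all $(A,B)$-invariant subspaces contained in $\operatorname{Ker}C$ there is a maximal one, $\mathcal{V}^*(C)$. *)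

theory Defs
  imports "HOL-Analysis.Analysis"
begin

primrec mat_pow :: "real^'n^'n \<Rightarrow> nat \<Rightarrow> real^'n^'n" where
  "mat_pow M 0 = mat 1"
| "mat_pow M (Suc k) = M ** mat_pow M k"

definition ker_mat :: "real^'n^'m \<Rightarrow> (real^'n) set" where
  "ker_mat C = {x. C *v x = 0}"

text \<open>Kernel of the stacked matrix Omega(C,F) = [C; C(A+BF); ...; C(A+BF)^(n-1)],
  n = CARD('n): a vector lies in it iff it lies in the kernel of every block.\<close>
definition omega_ker :: "real^'n^'n \<Rightarrow> real^'k^'n \<Rightarrow> real^'n^'k \<Rightarrow> real^'n^'m \<Rightarrow> (real^'n) set" where
  "omega_ker A B F C = {x. \<forall>i<CARD('n). (C ** mat_pow (A + B ** F) i) *v x = 0}"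

definition AB_invariant :: "real^'n^'n \<Rightarrow> real^'k^'n \<Rightarrow> (real^'n) set \<Rightarrow> bool" where
  "AB_invariant A B V \<longleftrightarrow> subspace V \<and>
     (\<exists>F' :: real^'n^'k. \<forall>x\<in>V. (A + B ** F') *v x \<in> V)"

definition V_star :: "real^'n^'n \<Rightarrow> real^'k^'n \<Rightarrow> real^'n^'m \<Rightarrow> (real^'n) set" where
  "V_star A B C = (THE V. AB_invariant A B V \<and> V \<subseteq> ker_mat C \<and>
      (\<forall>W. AB_invariant A B W \<and> W \<subseteq> ker_mat C \<longrightarrow> W \<subseteq> V))"

definition BR1 :: "real^'n^'n \<Rightarrow> real^'k^'n \<Rightarrow> real^'n^'k \<Rightarrow> (real^'n^'m) set" where
  "BR1 A B F = {C. \<forall>C' :: real^'n^'m. dim (omega_ker A B F C) \<le> dim (omega_ker A B F C')}"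

definition BR2X :: "real^'n^'n \<Rightarrow> real^'k^'n \<Rightarrow> (real^'n^'m) set" where
  "BR2X A B = {C. \<forall>C' :: real^'n^'m. dim (V_star A B C) \<le> dim (V_star A B C')}"

end

theory Submission
  imports Defs
begin

lemma mat_pow_comm: "mat_pow M i ** M = M ** mat_pow M i"
proof (induction i)
  case (Suc i)
  have "M ** mat_pow M i ** M = M ** (mat_pow M i ** M)" by (simp add: matrix_mul_assoc)
  also have "\<dots> = M ** (M ** mat_pow M i)" using Suc by simp
  finally show ?case by (simp add: matrix_mul_assoc)
qed simp

lemma mp_Suc: "mat_pow M (Suc i) *v x = M *v (mat_pow M i *v x)"
  by (simp add: matrix_vector_mul_assoc)

lemma mp_0: "mat_pow M 0 *v x = x"
  by simp

lemma neg_mv: "B *v (- u) = - (B *v (u::real^'k))"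
  by (simp add: vec_eq_iff matrix_vector_mult_def sum_negf)

lemma setsuc: "{f i | i. i < Suc n} = insert (f n) {f i | i. i < n}"
  by (auto simp: less_Suc_eq)

lemma mat_pow_Suc_vec: "mat_pow M (Suc i) *v x = mat_pow M i *v (M *v x)"
  by (simp add: matrix_vector_mul_assoc mat_pow_comm)

declare mat_pow.simps[simp del]

lemma krylov_indep:
  fixes M :: "real^'n^'n" and x :: "real^'n"
  assumes "\<forall>j\<le>J. mat_pow M j *v x \<notin> span {mat_pow M i *v x | i. i < j}"
  shows "independent {mat_pow M i *v x | i. i < J + 1} \<and> card {mat_pow M i *v x | i. i < J + 1} = J + 1"
  using assms
proof (induction J)
  case 0
  have e: "{mat_pow M i *v x | i. i < 0 + 1} = {mat_pow M 0 *v x}" by auto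
  have "mat_pow M 0 *v x \<notin> span {mat_pow M i *v x | i. i < 0}"
    by (rule 0[rule_format]) simp
  moreover have "{mat_pow M i *v x | i. i < (0::nat)} = {}" by simp
  ultimately have "mat_pow M 0 *v x \<noteq> 0" by (metis span_empty singletonI)
  then show ?case unfolding e by simp
next
  case (Suc J)
  let ?S = "{mat_pow M i *v x | i. i < Suc J}"
  have pr: "\<forall>j\<le>J. mat_pow M j *v x \<notin> span {mat_pow M i *v x | i. i < j}"
  proof (intro allI impI)
    fix j assume "j \<le> J"
    then show "mat_pow M j *v x \<notin> span {mat_pow M i *v x | i. i < j}"
      by (intro Suc.prems[rule_format]) simp
  qed
  have IH: "independent ?S \<and> card ?S = Suc J" using Suc.IH[OF pr] by simp
  have eq: "{mat_pow M i *v x | i. i < Suc J + 1} = insert (mat_pow M (Suc J) *v x) ?S"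
    using setsuc[of "\<lambda>i. mat_pow M i *v x" "Suc J"] by simp
  have nin: "mat_pow M (Suc J) *v x \<notin> span ?S"
    by (rule Suc.prems[rule_format]) simp
  have notin: "mat_pow M (Suc J) *v x \<notin> ?S" 
  proof
    assume "mat_pow M (Suc J) *v x \<in> ?S"
    hence "mat_pow M (Suc J) *v x \<in> span ?S" by (rule span_base)
    with nin show False by contradiction
  qed
  have fin: "finite ?S" using independent_bound IH by blast
  have "independent (insert (mat_pow M (Suc J) *v x) ?S)"
    using IH nin notin by (simp only: independent_insert if_False) simp
  moreover have "card (insert (mat_pow M (Suc J) *v x) ?S) = Suc J + 1"
    using IH notin fin by simp
  ultimately show ?case unfolding eq by blast
qed

lemma krylov_exists:
  fixes M :: "real^'n^'n" and x :: "real^'n"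
  shows "\<exists>j\<le>CARD('n). mat_pow M j *v x \<in> span {mat_pow M i *v x | i. i < j}"
proof (rule ccontr)
  assume "\<not> ?thesis"
  hence "\<forall>j\<le>CARD('n). mat_pow M j *v x \<notin> span {mat_pow M i *v x | i. i < j}" by auto
  from krylov_indep[OF this] have "independent {mat_pow M i *v x | i. i < CARD('n) + 1}"
    and c: "card {mat_pow M i *v x | i. i < CARD('n) + 1} = CARD('n) + 1" by auto
  from independent_bound[OF this(1)] c show False by simp
qed

lemma krylov_closed:
  fixes M :: "real^'n^'n" and x :: "real^'n"
  assumes "mat_pow M j *v x \<in> span {mat_pow M i *v x | i. i < j}"
  shows "y \<in> span {mat_pow M i *v x | i. i < j} \<Longrightarrow> M *v y \<in> span {mat_pow M i *v x | i. i < j}"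
proof -
  let ?S = "{mat_pow M i *v x | i. i < j}"
  assume y: "y \<in> span ?S"
  have sub: "subspace {y. M *v y \<in> span ?S}"
    unfolding subspace_def
    by (simp add: matrix_vector_right_distrib matrix_vector_mult_scaleR span_add span_scale span_zero)
  show ?thesis
  proof (rule span_induct[OF y sub])
    fix z assume "z \<in> ?S"
    then obtain i where i: "i < j" "z = mat_pow M i *v x" by auto
    have mz: "M *v z = mat_pow M (Suc i) *v x" using i by (simp add: mp_Suc)
    have "mat_pow M (Suc i) *v x \<in> span ?S"
    proof (cases "Suc i = j")
      case True then show ?thesis using assms by simp
    next
      case False
      hence "mat_pow M (Suc i) *v x \<in> ?S" using i by auto
      then show ?thesis by (rule span_base)
    qed
    then show "M *v z \<in> span ?S" using mz by simp
  qed
qed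

lemma krylov_all:
  fixes M :: "real^'n^'n" and x :: "real^'n"
  assumes "mat_pow M j *v x \<in> span {mat_pow M i *v x | i. i < j}"
  shows "mat_pow M k *v x \<in> span {mat_pow M i *v x | i. i < j}"
proof (induction k)
  case 0
  show ?case
  proof (cases "j = 0")
    case True then show ?thesis using assms by simp
  next
    case False
    hence "mat_pow M 0 *v x \<in> {mat_pow M i *v x | i. i < j}" by (auto intro!: exI[of _ "0::nat"])
    then show ?thesis by (rule span_base)
  qed
next
  case (Suc k)
  have "mat_pow M (Suc k) *v x = M *v (mat_pow M k *v x)" by (simp add: mp_Suc)
  then show ?case using krylov_closed[OF assms Suc] by simp
qed

lemma cayley_like:
  fixes M :: "real^'n^'n" and x :: "real^'n"
  shows "mat_pow M CARD('n) *v x \<in> span {mat_pow M i *v x | i. i < CARD('n)}"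
proof -
  obtain j where j: "j \<le> CARD('n)" "mat_pow M j *v x \<in> span {mat_pow M i *v x | i. i < j}"
    using krylov_exists by blast
  have "span {mat_pow M i *v x | i. i < j} \<subseteq> span {mat_pow M i *v x | i. i < CARD('n)}"
    using j(1) by (intro span_mono) auto
  with krylov_all[OF j(2)] show ?thesis by blast
qed

lemma AB_inv_D:
  assumes "AB_invariant A B V" "x \<in> V"
  shows "\<exists>v\<in>V. \<exists>u. A *v x = v + B *v u"
proof -
  from assms obtain F' where F': "\<forall>x\<in>V. (A + B ** F') *v x \<in> V" unfolding AB_invariant_def by blast
  hence mem: "A *v x + B *v (F' *v x) \<in> V" using assms(2)
    by (simp add: matrix_vector_mul_assoc matrix_vector_mult_add_rdistrib)
  have eq: "A *v x = (A *v x + B *v (F' *v x)) + B *v (- (F' *v x))"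
    by (simp add: neg_mv)
  show ?thesis
  proof (rule bexI[OF _ mem])
    show "\<exists>u. A *v x = (A *v x + B *v (F' *v x)) + B *v u"
      by (rule exI[of _ "- (F' *v x)"]) (rule eq)
  qed
qed

lemma AB_inv_I:
  fixes A :: "real^'n^'n" and B :: "real^'k^'n" and V :: "(real^'n) set"
  assumes sV: "subspace V" and h: "\<forall>x\<in>V. \<exists>v\<in>V. \<exists>u. A *v x = v + B *v u"
  shows "AB_invariant A B V"
proof -
  obtain b where b: "b \<subseteq> V" "independent b" "V \<subseteq> span b" "card b = dim V"
    by (rule basis_exists)
  have "\<forall>x. \<exists>u. x \<in> V \<longrightarrow> A *v x + B *v u \<in> V"
  proof
    fix x show "\<exists>u. x \<in> V \<longrightarrow> A *v x + B *v u \<in> V"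
    proof (cases "x \<in> V")
      case True
      then obtain v u where "v \<in> V" "A *v x = v + B *v u" using h by blast
      hence "A *v x + B *v (- u) \<in> V" by (simp add: neg_mv)
      then show ?thesis by blast
    qed simp
  qed
  then have "\<exists>u. \<forall>x. x \<in> V \<longrightarrow> A *v x + B *v u x \<in> V" by (rule choice)
  then obtain u where u': "\<forall>x. x \<in> V \<longrightarrow> A *v x + B *v u x \<in> V" by (rule exE)
  have u: "A *v x + B *v u x \<in> V" if "x \<in> V" for x using u' that by blast
  obtain g where g: "linear g" "\<forall>x\<in>b. g x = u x"
    using linear_independent_extend[OF b(2)] by blast
  define F' where "F' = matrix g"
  have Fg: "F' *v y = g y" for y unfolding F'_def using g(1) matrix_vector_mul(2) by metis
  have sub: "subspace {y. (A + B ** F') *v y \<in> V}"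
    using sV unfolding subspace_def
    by (simp add: matrix_vector_right_distrib matrix_vector_mult_scaleR)
  have "\<forall>x\<in>V. (A + B ** F') *v x \<in> V"
  proof
    fix x assume "x \<in> V"
    hence xs: "x \<in> span b" using b by blast
    show "(A + B ** F') *v x \<in> V"
    proof (rule span_induct[OF xs sub, simplified])
      fix z assume "z \<in> b"
      then show "(A + B ** F') *v z \<in> V" using u[of z] b(1) g(2) Fg
        by (auto simp: matrix_vector_mult_add_rdistrib matrix_vector_mul_assoc[symmetric])
    qed
  qed
  then show ?thesis unfolding AB_invariant_def using sV by blast
qed

lemma AB_inv_sum:
  assumes "AB_invariant A B V" "AB_invariant A B W"
  shows "AB_invariant A B {x + y |x y. x \<in> V \<and> y \<in> W}"
proof (rule AB_inv_I)
  show "subspace {x + y |x y. x \<in> V \<and> y \<in> W}"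
    using assms subspace_sums unfolding AB_invariant_def by blast
  show "\<forall>x\<in>{x + y |x y. x \<in> V \<and> y \<in> W}. \<exists>v\<in>{x + y |x y. x \<in> V \<and> y \<in> W}. \<exists>u. A *v x = v + B *v u"
  proof
    fix z assume "z \<in> {x + y |x y. x \<in> V \<and> y \<in> W}"
    then obtain x y where z: "z = x + y" "x \<in> V" "y \<in> W" by blast
    obtain v1 u1 where 1: "v1 \<in> V" "A *v x = v1 + B *v u1" using AB_inv_D[OF assms(1) z(2)] by blast
    obtain v2 u2 where 2: "v2 \<in> W" "A *v y = v2 + B *v u2" using AB_inv_D[OF assms(2) z(3)] by blast
    have "A *v z = (v1 + v2) + B *v (u1 + u2)"
      using 1 2 z by (simp add: matrix_vector_right_distrib)
    then show "\<exists>v\<in>{x + y |x y. x \<in> V \<and> y \<in> W}. \<exists>u. A *v z = v + B *v u"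
      using 1 2 by blast
  qed
qed

lemma subspace_ker: "subspace (ker_mat C)"
  unfolding ker_mat_def subspace_def
  by (simp add: matrix_vector_right_distrib matrix_vector_mult_scaleR)

lemma V_star_props:
  fixes A :: "real^'n^'n" and B :: "real^'k^'n" and C :: "real^'n^'m"
  shows "AB_invariant A B (V_star A B C) \<and> V_star A B C \<subseteq> ker_mat C \<and>
      (\<forall>W. AB_invariant A B W \<and> W \<subseteq> ker_mat C \<longrightarrow> W \<subseteq> V_star A B C)"
proof -
  let ?S = "{V. AB_invariant A B V \<and> V \<subseteq> ker_mat C}"
  let ?P = "\<lambda>V. AB_invariant A B V \<and> V \<subseteq> ker_mat C \<and>
      (\<forall>W. AB_invariant A B W \<and> W \<subseteq> ker_mat C \<longrightarrow> W \<subseteq> V)"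
  have z: "{0} \<in> ?S"
    unfolding AB_invariant_def ker_mat_def by (auto simp: subspace_0)
  have fin: "finite (dim ` ?S)"
    by (rule finite_subset[of _ "{..CARD('n)}"]) (auto simp: dim_subset_UNIV_cart)
  have "Max (dim ` ?S) \<in> dim ` ?S" using fin z by (intro Max_in) auto
  then obtain V where V: "V \<in> ?S" "dim V = Max (dim ` ?S)" by auto
  have PV: "?P V"
  proof -
    have "W \<subseteq> V" if W: "W \<in> ?S" for W
    proof -
      let ?U = "{x + y |x y. x \<in> V \<and> y \<in> W}"
      have inv: "AB_invariant A B ?U" using AB_inv_sum V W by blast
      have "?U \<subseteq> ker_mat C" using V W subspace_ker[of C]
        by (auto intro: subspace_add)
      hence "?U \<in> ?S" using inv by blast
      hence "dim ?U \<le> dim V" using V fin by simp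
      moreover have "V \<subseteq> ?U"
      proof
        fix x assume "x \<in> V"
        moreover have "0 \<in> W" using W unfolding AB_invariant_def by (auto intro: subspace_0)
        ultimately show "x \<in> ?U" by force
      qed
      moreover have "subspace V" "subspace ?U" using V inv unfolding AB_invariant_def by auto
      ultimately have "V = ?U" using subspace_dim_equal by blast
      moreover have "W \<subseteq> ?U"
      proof
        fix y assume "y \<in> W"
        moreover have "0 \<in> V" using V unfolding AB_invariant_def by (auto intro: subspace_0)
        ultimately show "y \<in> ?U" by force
      qed
      ultimately show ?thesis by simp
    qed
    then show ?thesis using V by blast
  qed
  have "?P (THE V. ?P V)"
    by (rule theI[of ?P V]) (use PV in blast, meson PV subset_antisym)
  then show ?thesis unfolding V_star_def .
qed

theorem lemma4:
  fixes A :: "real^'n^'n" and B :: "real^'k^'n" and F :: "real^'n^'k"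
    and C1 C2 :: "real^'n^'m"
  assumes "C1 \<in> BR2X A B" and "C2 \<in> BR1 A B F"
  shows "dim (V_star A B C1) \<ge> dim (omega_ker A B F C2)"
proof -
  let ?M = "A + B ** F"
  let ?K = "omega_ker A B F C1"
  have le: "dim (omega_ker A B F C2) \<le> dim ?K" using assms(2) unfolding BR1_def by blast
  have Kdef: "?K = {x. \<forall>i<CARD('n). C1 *v (mat_pow ?M i *v x) = 0}"
    unfolding omega_ker_def by (simp add: matrix_vector_mul_assoc)
  have sK: "subspace ?K"
    unfolding Kdef subspace_def
    by (simp add: matrix_vector_right_distrib matrix_vector_mult_scaleR)
  have inv: "\<forall>x\<in>?K. ?M *v x \<in> ?K"
  proof
    fix x assume x: "x \<in> ?K"
    have ker: "subspace {y. C1 *v y = 0}"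
      unfolding subspace_def by (simp add: matrix_vector_right_distrib matrix_vector_mult_scaleR)
    have "C1 *v (mat_pow ?M (Suc i) *v x) = 0" if i: "i < CARD('n)" for i
    proof (cases "Suc i < CARD('n)")
      case True then show ?thesis using x Kdef by blast
    next
      case False
      hence si: "Suc i = CARD('n)" using i by simp
      have "mat_pow ?M i *v x \<in> span {mat_pow ?M i *v x | i. i < CARD('n)} \<longrightarrow> True" by simp
      have "{mat_pow ?M i *v x | i. i < CARD('n)} \<subseteq> {y. C1 *v y = 0}" using x Kdef by blast
      hence "span {mat_pow ?M i *v x | i. i < CARD('n)} \<subseteq> {y. C1 *v y = 0}"
        using ker span_minimal by blast
      then show ?thesis using cayley_like[of ?M x] si by auto
    qed
    then show "?M *v x \<in> ?K" unfolding Kdef by (simp add: mat_pow_Suc_vec[symmetric])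
  qed
  have "AB_invariant A B ?K" unfolding AB_invariant_def using sK inv by blast
  moreover have "?K \<subseteq> ker_mat C1"
  proof
    fix x assume "x \<in> ?K"
    hence "C1 *v (mat_pow ?M 0 *v x) = 0" unfolding Kdef using zero_less_card_finite by blast
    hence "C1 *v x = 0" by (simp add: mp_0)
    then show "x \<in> ker_mat C1" unfolding ker_mat_def by simp
  qed
  ultimately have "?K \<subseteq> V_star A B C1" using V_star_props[of A B C1] by blast
  hence "dim ?K \<le> dim (V_star A B C1)" by (rule dim_subset)
  with le show ?thesis by simp
qed

end
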